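(* Let $G$ be a graph on vertex set $V=\{1,\ldots,n\}$ and $G_l$ a graph on $V$ with $E(G)\subseteq E(G_l)$. Suppose $A\in\mathcal{S}(G)$, $X\in\overline{\mathcal{S}_0}(G_l^c)$, and $AX-XA=0$. If there exists a vertex $i$ such that the induced subgraph $G_l^c[N_G(i)]$ has a connected component that is a cycle $C$ of odd length, and for each $j\in V(C)$ the pair $\{i,j\}$ is focused on $V(C)$ with respect to $G$ and $G_l$, then $X\in\overline{\mathcal{S}_0}(G_{l+1}^c)$, where $G_{l+1}=G_l+E(C)$.
   Context: All graphs are finite, simple, undirected. For a graph $G$ on $\{1,\ldots,n\}$, $\mathcal{S}(G)$ is the set of real symmetric $n\times n$ matrices $A=(a_{ij})$ with $a_{ij}\neq0$ iff $\{i,j\}\in E(G)$ for $i\neq j$ (diagonal arbitrary). For a graph $H$ on $\{1,\ldots,n\}$, $\overline{\mathcal{S}_0}(H)$ is the set of real symmetric matrices whose $(i,j)$ entry is zero whenever $i=j$ or $\{i,j\}\notin E(H)$; $H^c$ is the complement of $H$. $N_G(i)$ is the (open) set of neighbours of $i$ in $G$, $N_G[i]$ the closed neighbourhood, and $N_G[i]^c$ its complement in $V$; $H[W]$ is the subgraph of $H$ induced on $W$. For nonempty $U\subseteq V$, a pair $\{i,j\}$ is focused on $U$ with respect to $G$ and $G_l$ if $N_G[i]\cap N_{G_l}[j]^c\subseteq U$ and $N_G[j]\cap N_{G_l}[i]^c\subseteq U$. *)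

theory Defs
  imports "HOL-Analysis.Analysis"
begin

text \<open>Graphs on the finite vertex type 'n (vertex set V = UNIV), given by their
  edge sets: an edge is a 2-element set of vertices.\<close>

definition simple_graph :: "'n set set \<Rightarrow> bool" where
  "simple_graph E \<longleftrightarrow> (\<forall>e\<in>E. card e = 2)"

definition graph_compl :: "'n set set \<Rightarrow> 'n set set" where
  "graph_compl E = {{i, j} | i j. i \<noteq> j \<and> {i, j} \<notin> E}"

definition nbhd :: "'n set set \<Rightarrow> 'n \<Rightarrow> 'n set" where
  "nbhd E i = {j. {i, j} \<in> E}"

definition closed_nbhd :: "'n set set \<Rightarrow> 'n \<Rightarrow> 'n set" where
  "closed_nbhd E i = insert i (nbhd E i)"

definition induced_edges :: "'n set set \<Rightarrow> 'n set \<Rightarrow> 'n set set" where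
  "induced_edges E W = {e \<in> E. e \<subseteq> W}"

definition S_pattern :: "'n set set \<Rightarrow> (real^'n^'n) set" where
  "S_pattern E = {A. transpose A = A \<and>
     (\<forall>i j. i \<noteq> j \<longrightarrow> (A $ i $ j \<noteq> 0 \<longleftrightarrow> {i, j} \<in> E))}"

definition S0_bar :: "'n set set \<Rightarrow> (real^'n^'n) set" where
  "S0_bar E = {X. transpose X = X \<and>
     (\<forall>i j. (i = j \<or> {i, j} \<notin> E) \<longrightarrow> X $ i $ j = 0)}"

definition is_cycle :: "nat \<Rightarrow> 'n set \<Rightarrow> 'n set set \<Rightarrow> bool" where
  "is_cycle k VC EC \<longleftrightarrow> (\<exists>vs. distinct vs \<and> length vs = k \<and> k \<ge> 3 \<and> set vs = VC \<and>
     EC = {{vs ! t, vs ! ((t + 1) mod k)} | t. t < k})"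

text \<open>Since a cycle is connected, being a connected component amounts to:
  VC \<subseteq> W, EC is the induced edge set on VC, and no edge of E joins VC to W - VC.\<close>
definition odd_cycle_component :: "'n set set \<Rightarrow> 'n set \<Rightarrow> 'n set \<Rightarrow> 'n set set \<Rightarrow> bool" where
  "odd_cycle_component E W VC EC \<longleftrightarrow>
     VC \<subseteq> W \<and> EC = induced_edges E VC \<and>
     (\<forall>u\<in>VC. \<forall>w\<in>W - VC. {u, w} \<notin> E) \<and>
     (\<exists>k. odd k \<and> is_cycle k VC EC)"

definition focused :: "'n set set \<Rightarrow> 'n set set \<Rightarrow> 'n set \<Rightarrow> 'n \<Rightarrow> 'n \<Rightarrow> bool" where
  "focused G Gl U i j \<longleftrightarrow>
     closed_nbhd G i \<inter> - closed_nbhd Gl j \<subseteq> U \<and>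
     closed_nbhd G j \<inter> - closed_nbhd Gl i \<subseteq> U"

end

theory Submission
  imports Defs
begin

lemma sym_entry: "transpose X = X \<Longrightarrow> X $ a $ b = X $ b $ a"
  by (metis transpose_transpose transpose_def vec_lambda_beta)

lemma gc_iff: "{a, b} \<in> graph_compl E \<longleftrightarrow> a \<noteq> b \<and> {a, b} \<notin> E"
proof
  assume h: "{a, b} \<in> graph_compl E"
  then obtain c d where "{a, b} = {c, d}" "c \<noteq> d" "{c, d} \<notin> E"
    unfolding graph_compl_def by blast
  then show "a \<noteq> b \<and> {a, b} \<notin> E" by (metis doubleton_eq_iff)
next
  assume "a \<noteq> b \<and> {a, b} \<notin> E"
  then show "{a, b} \<in> graph_compl E" unfolding graph_compl_def by blast
qed

theorem lemma3p8:
  fixes G Gl :: "'n::finite set set"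
    and A X :: "real^'n^'n"
    and i :: 'n and VC :: "'n set" and EC :: "'n set set"
  assumes "simple_graph G" and "simple_graph Gl" and "G \<subseteq> Gl"
    and "A \<in> S_pattern G" and "X \<in> S0_bar (graph_compl Gl)"
    and "A ** X - X ** A = 0"
    and "odd_cycle_component (induced_edges (graph_compl Gl) (nbhd G i)) (nbhd G i) VC EC"
    and "\<forall>j\<in>VC. focused G Gl VC i j"
  shows "X \<in> S0_bar (graph_compl (Gl \<union> EC))"
proof -
  have tX: "transpose X = X" and X0': "\<forall>a b. (a = b \<or> {a, b} \<notin> graph_compl Gl) \<longrightarrow> X $ a $ b = 0"
    using assms(5) unfolding S0_bar_def by simp_all
  have tA: "transpose A = A" and A0': "\<forall>a b. a \<noteq> b \<longrightarrow> (A $ a $ b \<noteq> 0 \<longleftrightarrow> {a, b} \<in> G)"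
    using assms(4) unfolding S_pattern_def by simp_all
  have Xs: "\<And>a b. X $ a $ b = X $ b $ a" using tX by (rule sym_entry)
  have X0: "\<And>a b. a = b \<or> {a, b} \<notin> graph_compl Gl \<Longrightarrow> X $ a $ b = 0"
    using X0' by blast
  have Xnz: "\<And>a b. X $ a $ b \<noteq> 0 \<Longrightarrow> a \<noteq> b \<and> {a, b} \<notin> Gl"
  proof -
    fix a b assume "X $ a $ b \<noteq> 0"
    then have "a \<noteq> b" "{a, b} \<in> graph_compl Gl" using X0 by blast+
    moreover obtain c d where "{a, b} = {c, d}" "{c, d} \<notin> Gl"
      using \<open>{a, b} \<in> graph_compl Gl\<close> unfolding graph_compl_def by blast
    ultimately show "a \<noteq> b \<and> {a, b} \<notin> Gl" by simp
  qed
  have Anz: "\<And>a b. a \<noteq> b \<Longrightarrow> A $ a $ b \<noteq> 0 \<longleftrightarrow> {a, b} \<in> G"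
    using A0' by blast
  have comm: "\<And>a b. (A ** X) $ a $ b = (X ** A) $ a $ b"
  proof -
    have "A ** X = X ** A" using assms(6) by simp
    then show "\<And>a b. (A ** X) $ a $ b = (X ** A) $ a $ b" by simp
  qed
  have card2: "\<And>a. {a} \<notin> G"
  proof
    fix a assume "{a} \<in> G"
    then have "card {a} = 2" using assms(1) unfolding simple_graph_def by blast
    then show False by simp
  qed
  have occ: "VC \<subseteq> nbhd G i" "EC = induced_edges (induced_edges (graph_compl Gl) (nbhd G i)) VC"
    "\<exists>k. odd k \<and> is_cycle k VC EC"
    using assms(7) unfolding odd_cycle_component_def by blast+
  then obtain n vs where odd: "odd n" and dvs: "distinct vs" and lvs: "length vs = n" and n3: "n \<ge> 3"
    and svs: "set vs = VC" and ECd: "EC = {{vs ! t, vs ! ((t + 1) mod n)} | t. t < n}"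
    unfolding is_cycle_def by blast
  have VCG: "\<And>v. v \<in> VC \<Longrightarrow> {i, v} \<in> G" using occ(1) unfolding nbhd_def by blast
  have VCne: "\<And>v. v \<in> VC \<Longrightarrow> v \<noteq> i" using VCG card2 by fastforce
  have vin: "\<And>t. t < n \<Longrightarrow> vs ! t \<in> VC" using svs lvs by auto
  define a where "a t = A $ i $ (vs ! t)" for t
  define x where "x t = X $ (vs ! t) $ (vs ! ((t + 1) mod n))" for t
  have anz: "\<And>t. t < n \<Longrightarrow> a t \<noteq> 0" unfolding a_def using Anz VCne VCG vin by metis
  have ECmem: "{u, v} \<in> EC \<Longrightarrow> u \<in> VC \<and> v \<in> VC \<and> u \<noteq> v \<and> {u, v} \<notin> Gl" for u v
  proof -
    assume "{u, v} \<in> EC"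
    then have "{u, v} \<subseteq> VC" "{u, v} \<in> graph_compl Gl" using occ(2) unfolding induced_edges_def by auto
    then show ?thesis by (simp add: gc_iff)
  qed
  have ECin: "\<And>u v. u \<in> VC \<Longrightarrow> v \<in> VC \<Longrightarrow> u \<noteq> v \<Longrightarrow> {u, v} \<notin> Gl \<Longrightarrow> {u, v} \<in> EC"
    using occ(1,2) unfolding induced_edges_def graph_compl_def by blast
  have eq: "a ((t + n - 1) mod n) * X $ (vs ! ((t + n - 1) mod n)) $ (vs ! t)
          + a ((t + 1) mod n) * X $ (vs ! ((t + 1) mod n)) $ (vs ! t) = 0" if tn: "t < n" for t
  proof -
    define p where "p = (t + n - 1) mod n"
    define s where "s = (t + 1) mod n"
    define j where "j = vs ! t"
    have pn: "p < n" "s < n" using n3 unfolding p_def s_def by auto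
    have pne: "p \<noteq> s" "p \<noteq> t" "s \<noteq> t" using n3 tn unfolding p_def s_def
      by (auto simp: mod_if split: if_splits)
    have jV: "j \<in> VC" using vin tn j_def by auto
    have foc: "focused G Gl VC i j" using assms(8) jV by blast
    have R0: "(X ** A) $ i $ j = (\<Sum>k\<in>UNIV. X $ i $ k * A $ k $ j)"
      by (simp add: matrix_matrix_mult_def)
    have R1: "(\<Sum>k\<in>UNIV. X $ i $ k * A $ k $ j) = 0"
    proof (rule sum.neutral, rule ballI)
      fix k
      show "X $ i $ k * A $ k $ j = 0"
      proof (rule ccontr)
        assume h: "X $ i $ k * A $ k $ j \<noteq> 0"
        then have "X $ i $ k \<noteq> 0" "A $ k $ j \<noteq> 0" by auto
        then have k1: "i \<noteq> k" "{i, k} \<notin> Gl" and k2: "k = j \<or> {j, k} \<in> G"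
          using Xnz Anz[of k j] insert_commute[of k j "{}"] by auto
        have "k \<in> closed_nbhd G j \<inter> - closed_nbhd Gl i"
          using k1 k2 unfolding closed_nbhd_def nbhd_def by auto
        then have "k \<in> VC" using foc unfolding focused_def by blast
        then show False using VCG assms(3) k1 by blast
      qed
    qed
    have R: "(X ** A) $ i $ j = 0" using R0 R1 by simp
    have L0: "(A ** X) $ i $ j = (\<Sum>k\<in>UNIV. A $ i $ k * X $ k $ j)"
      by (simp add: matrix_matrix_mult_def)
    have L1: "(\<Sum>k\<in>UNIV. A $ i $ k * X $ k $ j) = (\<Sum>k\<in>{vs ! p, vs ! s}. A $ i $ k * X $ k $ j)"
    proof (rule sum.mono_neutral_right, simp, simp, rule ballI)
      fix k assume kk: "k \<in> UNIV - {vs ! p, vs ! s}"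
      show "A $ i $ k * X $ k $ j = 0"
      proof (rule ccontr)
        assume h: "A $ i $ k * X $ k $ j \<noteq> 0"
        then have "X $ k $ j \<noteq> 0" "A $ i $ k \<noteq> 0" by auto
        then have k1: "k \<noteq> j" "{k, j} \<notin> Gl" and k2: "k = i \<or> {i, k} \<in> G"
          using Xnz Anz[of i k] by auto
        have "k \<in> closed_nbhd G i \<inter> - closed_nbhd Gl j"
          using k1 k2 insert_commute[of k j "{}"] unfolding closed_nbhd_def nbhd_def by auto
        then have kV: "k \<in> VC" using foc unfolding focused_def by blast
        then have "{k, j} \<in> EC" using ECin jV k1 by blast
        then obtain u where u: "u < n" "{k, j} = {vs ! u, vs ! ((u + 1) mod n)}"
          using ECd by blast
        have un: "(u + 1) mod n < n" using n3 by auto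
        have "k = vs ! u \<and> j = vs ! ((u + 1) mod n) \<or> k = vs ! ((u + 1) mod n) \<and> j = vs ! u"
          using u(2) by (auto simp: doubleton_eq_iff)
        then show False
        proof
          assume "k = vs ! u \<and> j = vs ! ((u + 1) mod n)"
          then have "t = (u + 1) mod n" using j_def nth_eq_iff_index_eq[OF dvs] lvs tn un by metis
          then have "u = p" unfolding p_def using u(1) n3
            by (cases "u + 1 = n") auto
          then show False using kk \<open>k = vs ! u \<and> _\<close> by auto
        next
          assume "k = vs ! ((u + 1) mod n) \<and> j = vs ! u"
          then have "t = u" using j_def nth_eq_iff_index_eq[OF dvs] lvs tn u(1) by metis
          then show False using kk \<open>k = _ \<and> j = vs ! u\<close> s_def by auto
        qed
      qed
    qed
    have "vs ! p \<noteq> vs ! s" using pne pn nth_eq_iff_index_eq[OF dvs] lvs by metis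
    then have "(A ** X) $ i $ j = A $ i $ (vs ! p) * X $ (vs ! p) $ j + A $ i $ (vs ! s) * X $ (vs ! s) $ j"
      using L0 L1 by simp
    then show ?thesis using R comm unfolding a_def p_def s_def j_def by simp
  qed
  define z where "z t = a t * a ((t + 1) mod n) * x t" for t
  have zstep: "z ((t + 1) mod n) = - z t" if tn: "t < n" for t
  proof -
    define s where "s = (t + 1) mod n"
    have sn: "s < n" using n3 s_def by auto
    have ps: "(s + n - 1) mod n = t" unfolding s_def using tn n3
      by (cases "t + 1 = n") auto
    have e0: "a ((s + n - 1) mod n) * X $ (vs ! ((s + n - 1) mod n)) $ (vs ! s)
          + a ((s + 1) mod n) * X $ (vs ! ((s + 1) mod n)) $ (vs ! s) = 0" by (rule eq[OF sn])
    have xt: "x t = X $ (vs ! t) $ (vs ! s)" unfolding x_def s_def by (rule refl)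
    have xs: "x s = X $ (vs ! ((s + 1) mod n)) $ (vs ! s)" unfolding x_def by (rule Xs)
    have e: "a t * x t + a ((s + 1) mod n) * x s = 0"
      using e0 unfolding ps xt xs .
    have "a s * (a t * x t + a ((s + 1) mod n) * x s) = 0" using e by simp
    then show ?thesis unfolding z_def s_def by (simp add: algebra_simps)
  qed
  have zpow: "z (m mod n) = (-1) ^ m * z 0" for m
  proof (induction m)
    case 0 then show ?case by simp
  next
    case (Suc m)
    have "z (Suc m mod n) = z ((m mod n + 1) mod n)" by (simp add: mod_Suc_eq)
    also have "\<dots> = - z (m mod n)" using zstep n3 by simp
    finally show ?case using Suc by simp
  qed
  have "z 0 = - z 0" using zpow[of n] odd by simp
  then have z00: "z 0 = 0" by simp
  have x0: "x t = 0" if tn: "t < n" for t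
  proof -
    have "z t = 0" using zpow[of t] z00 tn by simp
    moreover have "(t + 1) mod n < n" using n3 by auto
    then have "a ((t + 1) mod n) \<noteq> 0" by (rule anz)
    moreover have "a t \<noteq> 0" using tn by (rule anz)
    ultimately show ?thesis unfolding z_def by simp
  qed
  show ?thesis unfolding S0_bar_def
  proof (intro CollectI conjI allI impI)
    show "transpose X = X" by (rule tX)
  next
    fix u v assume h: "u = v \<or> {u, v} \<notin> graph_compl (Gl \<union> EC)"
    show "X $ u $ v = 0"
    proof (cases "u = v \<or> {u, v} \<in> Gl")
      case True then show ?thesis using X0[of u v] gc_iff[of u v Gl] by auto
    next
      case False
      then have "{u, v} \<in> EC" using h gc_iff[of u v "Gl \<union> EC"] by blast
      then obtain t where t: "t < n" "{u, v} = {vs ! t, vs ! ((t + 1) mod n)}" using ECd by blast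
      then have "u = vs ! t \<and> v = vs ! ((t + 1) mod n) \<or> v = vs ! t \<and> u = vs ! ((t + 1) mod n)"
        by (auto simp: doubleton_eq_iff)
      moreover have "X $ (vs ! t) $ (vs ! ((t + 1) mod n)) = 0" using x0[OF t(1)] unfolding x_def .
      moreover have "X $ (vs ! ((t + 1) mod n)) $ (vs ! t) = 0"
        using \<open>X $ (vs ! t) $ (vs ! ((t + 1) mod n)) = 0\<close> Xs[of "vs ! t"] by simp
      ultimately show ?thesis by blast
    qed
  qed
qed

end
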